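(* If $G$ and $G'$ are two distinct acyclic subgraphs of $K_{n,d}$ with $LD(G)=LD(G')$ and $RD(G)=RD(G')$, then $G$ and $G'$ are not compatible.
   Context: Fix positive integers $n,d$. $K_{n,d}$ denotes the complete bipartite graph with left vertex set $[n]=\{1,\dots,n\}$ and right vertex set $[\bar d]=\{\bar 1,\dots,\bar d\}$; all graphs considered are subgraphs of $K_{n,d}$ (identified with their edge sets). For a subgraph $G$, $LD(G)\in\mathbb Z_{\ge0}^{[n]}$ is the vector of degrees of the left vertices and $RD(G)\in\mathbb Z_{\ge 0}^{[\bar d]}$ the vector of degrees of the right vertices. Two acyclic subgraphs $G,G'$ are called compatible if whenever both contain a perfect matching between the same pair of vertex sets $I\subseteq[n]$ and $\bar J\subseteq[\bar d]$, these two matchings are equal. *)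

theory Defs
  imports Main
begin

text \<open>Subgraphs of K_{n,d}: edge sets G of pairs (i,j) with left vertex i in {1..n}
  and right vertex j in {1..d} (j stands for the right vertex j-bar).\<close>

definition subgraph_K :: "nat \<Rightarrow> nat \<Rightarrow> (nat \<times> nat) set \<Rightarrow> bool" where
  "subgraph_K n d G \<longleftrightarrow> G \<subseteq> {1..n} \<times> {1..d}"

definition LD :: "(nat \<times> nat) set \<Rightarrow> nat \<Rightarrow> nat" where
  "LD G i = card {j. (i, j) \<in> G}"

definition RD :: "(nat \<times> nat) set \<Rightarrow> nat \<Rightarrow> nat" where
  "RD G j = card {i. (i, j) \<in> G}"

definition has_cycle :: "(nat \<times> nat) set \<Rightarrow> bool" where
  "has_cycle G \<longleftrightarrow> (\<exists>(k::nat) (f::nat \<Rightarrow> nat) (g::nat \<Rightarrow> nat). k \<ge> 2 \<and> inj_on f {..<k} \<and> inj_on g {..<k} \<and>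
      (\<forall>t<k. (f t, g t) \<in> G \<and> (f ((t + 1) mod k), g t) \<in> G))"

definition acyclic_bip :: "(nat \<times> nat) set \<Rightarrow> bool" where
  "acyclic_bip G \<longleftrightarrow> \<not> has_cycle G"

definition perfect_matching_in :: "(nat \<times> nat) set \<Rightarrow> nat set \<Rightarrow> nat set \<Rightarrow> (nat \<times> nat) set \<Rightarrow> bool" where
  "perfect_matching_in G I J M \<longleftrightarrow> M \<subseteq> G \<and> M \<subseteq> I \<times> J \<and>
     (\<forall>i\<in>I. \<exists>!j. (i, j) \<in> M) \<and> (\<forall>j\<in>J. \<exists>!i. (i, j) \<in> M)"

definition compatible :: "nat \<Rightarrow> nat \<Rightarrow> (nat \<times> nat) set \<Rightarrow> (nat \<times> nat) set \<Rightarrow> bool" where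
  "compatible n d G G' \<longleftrightarrow> (\<forall>I J M M'. I \<subseteq> {1..n} \<longrightarrow> J \<subseteq> {1..d} \<longrightarrow>
     perfect_matching_in G I J M \<longrightarrow> perfect_matching_in G' I J M' \<longrightarrow> M = M')"

end

theory Submission
  imports Defs
begin

lemma card_split_eq:
  assumes "finite A" "finite B" "card A = card B"
  shows "card (A - B) = card (B - A)"
  using assms by (metis Int_commute card_Diff_subset_Int finite_Int)

lemma left_balance:
  assumes sg: "subgraph_K n d G" "subgraph_K n d G'"
    and ld: "\<forall>i\<in>{1..n}. LD G i = LD G' i"
    and e: "(i, j) \<in> G' - G"
  shows "\<exists>j'. (i, j') \<in> G - G'"
proof -
  have i: "i \<in> {1..n}" using e sg by (auto simp: subgraph_K_def)
  let ?A = "{j. (i, j) \<in> G}" and ?B = "{j. (i, j) \<in> G'}"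
  have "?A \<subseteq> {1..d}" using sg by (auto simp: subgraph_K_def)
  hence fA: "finite ?A" by (rule finite_subset) simp
  have "?B \<subseteq> {1..d}" using sg by (auto simp: subgraph_K_def)
  hence fB: "finite ?B" by (rule finite_subset) simp
  have "card ?A = card ?B" using ld i by (simp add: LD_def)
  hence c: "card (?A - ?B) = card (?B - ?A)" using card_split_eq fA fB by blast
  have "j \<in> ?B - ?A" using e by auto
  hence "card (?B - ?A) > 0" using fB by (auto simp: card_gt_0_iff)
  hence "card (?A - ?B) \<noteq> 0" using c by linarith
  hence "?A - ?B \<noteq> {}" by (metis card.empty)
  thus ?thesis by auto
qed

lemma right_balance:
  assumes sg: "subgraph_K n d G" "subgraph_K n d G'"
    and rd: "\<forall>j\<in>{1..d}. RD G j = RD G' j"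
    and e: "(i, j) \<in> G - G'"
  shows "\<exists>i'. (i', j) \<in> G' - G"
proof -
  have j: "j \<in> {1..d}" using e sg by (auto simp: subgraph_K_def)
  let ?A = "{i. (i, j) \<in> G}" and ?B = "{i. (i, j) \<in> G'}"
  have "?A \<subseteq> {1..n}" using sg by (auto simp: subgraph_K_def)
  hence fA: "finite ?A" by (rule finite_subset) simp
  have "?B \<subseteq> {1..n}" using sg by (auto simp: subgraph_K_def)
  hence fB: "finite ?B" by (rule finite_subset) simp
  have "card ?A = card ?B" using rd j by (simp add: RD_def)
  hence c: "card (?A - ?B) = card (?B - ?A)" using card_split_eq fA fB by blast
  have "i \<in> ?A - ?B" using e by auto
  hence "card (?A - ?B) > 0" using fA by (auto simp: card_gt_0_iff)
  hence "card (?B - ?A) \<noteq> 0" using c by linarith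
  hence "?B - ?A \<noteq> {}" by (metis card.empty)
  thus ?thesis by auto
qed

theorem mainTheorem2:
  fixes n d :: nat and G G' :: "(nat \<times> nat) set"
  assumes "n \<ge> 1" and "d \<ge> 1"
    and "subgraph_K n d G" and "subgraph_K n d G'"
    and "acyclic_bip G" and "acyclic_bip G'"
    and "G \<noteq> G'"
    and "\<forall>i\<in>{1..n}. LD G i = LD G' i"
    and "\<forall>j\<in>{1..d}. RD G j = RD G' j"
  shows "\<not> compatible n d G G'"
proof
  assume comp: "compatible n d G G'"
  note sg = assms(3,4)
  define R where "R = G - G'"
  define B where "B = G' - G"
  have lb: "\<And>i j. (i,j) \<in> B \<Longrightarrow> \<exists>j'. (i,j') \<in> R"
    using left_balance[OF sg assms(8)] unfolding R_def B_def by blast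
  have rb: "\<And>i j. (i,j) \<in> R \<Longrightarrow> \<exists>i'. (i',j) \<in> B"
    using right_balance[OF sg assms(9)] unfolding R_def B_def by blast
  obtain i0 j0 where e0: "(i0, j0) \<in> R"
  proof (cases "R = {}")
    case True
    then have "B \<noteq> {}" using assms(7) unfolding R_def B_def by auto
    then obtain i j where "(i,j) \<in> B" by auto
    then show ?thesis using lb that by blast
  next
    case False then show ?thesis using that by auto
  qed
  define yR where "yR = (\<lambda>i. SOME j. (i,j) \<in> R)"
  define xB where "xB = (\<lambda>j. SOME i. (i,j) \<in> B)"
  define x where "x = (\<lambda>t. ((xB \<circ> yR) ^^ t) i0)"
  define y where "y = (\<lambda>t. yR (x t))"
  have xS: "x (Suc t) = xB (y t)" for t by (simp add: x_def y_def)
  have inv: "\<exists>j. (x t, j) \<in> R" for t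
  proof (induction t)
    case 0 then show ?case using e0 by (auto simp: x_def)
  next
    case (Suc t)
    then have "(x t, y t) \<in> R" unfolding y_def yR_def by (rule someI_ex)
    then obtain i' where "(i', y t) \<in> B" using rb by blast
    then have "(xB (y t), y t) \<in> B" unfolding xB_def by (rule someI)
    then show ?case using lb xS by metis
  qed
  have red: "(x t, y t) \<in> R" for t
    using inv[of t] unfolding y_def yR_def by (rule someI_ex)
  have blue: "(x (Suc t), y t) \<in> B" for t
  proof -
    obtain i' where "(i', y t) \<in> B" using rb red by blast
    then have "(xB (y t), y t) \<in> B" unfolding xB_def by (rule someI)
    then show ?thesis using xS by simp
  qed
  have xr: "x t \<in> {1..n}" for t using red[of t] sg by (auto simp: R_def subgraph_K_def)
  have yr: "y t \<in> {1..d}" for t using red[of t] sg by (auto simp: R_def subgraph_K_def)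
  have "\<not> inj_on x {0..n}"
  proof
    assume "inj_on x {0..n}"
    then have "card (x ` {0..n}) = n + 1" by (simp add: card_image)
    moreover have "card (x ` {0..n}) \<le> card {1..n}"
      using xr by (intro card_mono) auto
    ultimately show False by simp
  qed
  then obtain a b where ab: "a \<noteq> b" "x a = x b" unfolding inj_on_def by blast
  have ex: "\<exists>k. 0 < k \<and> (\<exists>p. x (p + k) = x p)"
  proof (cases "a < b")
    case True then show ?thesis using ab by (intro exI[of _ "b - a"]) (auto intro!: exI[of _ a])
  next
    case False then show ?thesis using ab by (intro exI[of _ "a - b"]) (auto intro!: exI[of _ b])
  qed
  define k where "k = (LEAST k. 0 < k \<and> (\<exists>p. x (p + k) = x p))"
  have kprop: "0 < k \<and> (\<exists>p. x (p + k) = x p)"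
    unfolding k_def using ex by (rule LeastI_ex)
  then obtain p where kp: "0 < k" "x (p + k) = x p" by blast
  have xinj: "x u \<noteq> x v" if "u < v" "v < u + k" for u v
  proof
    assume h: "x u = x v"
    have "0 < v - u \<and> (\<exists>p. x (p + (v - u)) = x p)"
      using that h by (auto intro!: exI[of _ u])
    then have "k \<le> v - u" unfolding k_def by (rule Least_le)
    then show False using that by simp
  qed
  have yinj: "y u \<noteq> y v" if "u < v" "v < u + k" for u v
    using xinj[of "Suc u" "Suc v"] that xS by auto
  have xinj': "u = v" if "x u = x v" "p \<le> u" "u < p + k" "p \<le> v" "v < p + k" for u v
    using xinj[of u v] xinj[of v u] that by (cases "u < v"; cases "v < u") auto
  have yinj': "u = v" if "y u = y v" "p \<le> u" "u < p + k" "p \<le> v" "v < p + k" for u v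
    using yinj[of u v] yinj[of v u] that by (cases "u < v"; cases "v < u") auto
  have xinj'': "u = v" if "x (Suc u) = x (Suc v)" "p \<le> u" "u < p + k" "p \<le> v" "v < p + k" for u v
    using xinj[of "Suc u" "Suc v"] xinj[of "Suc v" "Suc u"] that by (cases "u < v"; cases "v < u") auto
  define T where "T = {p..<p+k}"
  define I where "I = x ` T"
  define J where "J = y ` T"
  define M where "M = (\<lambda>t. (x t, y t)) ` T"
  define M' where "M' = (\<lambda>t. (x (Suc t), y t)) ` T"
  have xSI: "x (Suc t) \<in> I" if "t \<in> T" for t
  proof (cases "Suc t = p + k")
    case True then show ?thesis using kp unfolding I_def T_def by (auto intro!: image_eqI[of _ _ p])
  next
    case False then show ?thesis using that unfolding I_def T_def by auto
  qed
  have pm: "perfect_matching_in G I J M"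
    unfolding perfect_matching_in_def
  proof (intro conjI ballI)
    show "M \<subseteq> G" using red unfolding M_def R_def by auto
    show "M \<subseteq> I \<times> J" unfolding M_def I_def J_def by auto
  next
    fix i assume "i \<in> I"
    then obtain s where s: "s \<in> T" "i = x s" unfolding I_def by auto
    show "\<exists>!j. (i, j) \<in> M"
    proof (rule ex1I[of _ "y s"])
      show "(i, y s) \<in> M" using s unfolding M_def by auto
    next
      fix j assume "(i, j) \<in> M"
      then obtain t where "t \<in> T" "x t = i" "y t = j" unfolding M_def by auto
      then show "j = y s" using s xinj' unfolding T_def by auto
    qed
  next
    fix j assume "j \<in> J"
    then obtain s where s: "s \<in> T" "j = y s" unfolding J_def by auto
    show "\<exists>!i. (i, j) \<in> M"
    proof (rule ex1I[of _ "x s"])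
      show "(x s, j) \<in> M" using s unfolding M_def by auto
    next
      fix i assume "(i, j) \<in> M"
      then obtain t where "t \<in> T" "x t = i" "y t = j" unfolding M_def by auto
      then show "i = x s" using s yinj' unfolding T_def by auto
    qed
  qed
  have pm': "perfect_matching_in G' I J M'"
    unfolding perfect_matching_in_def
  proof (intro conjI ballI)
    show "M' \<subseteq> G'" using blue unfolding M'_def B_def by auto
    show "M' \<subseteq> I \<times> J" using xSI unfolding M'_def J_def by auto
  next
    fix i assume "i \<in> I"
    then obtain s where s: "s \<in> T" "i = x s" unfolding I_def by auto
    obtain s' where s': "s' \<in> T" "x (Suc s') = i"
    proof (cases "s = p")
      case True then show ?thesis using that[of "p + k - 1"] kp s unfolding T_def by auto
    next
      case False
      then have "p \<le> s - 1" "s - 1 < p + k" "Suc (s - 1) = s" using s unfolding T_def by auto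
      then show ?thesis using that[of "s - 1"] s unfolding T_def by auto
    qed
    show "\<exists>!j. (i, j) \<in> M'"
    proof (rule ex1I[of _ "y s'"])
      show "(i, y s') \<in> M'" using s' unfolding M'_def by auto
    next
      fix j assume "(i, j) \<in> M'"
      then obtain t where "t \<in> T" "x (Suc t) = i" "y t = j" unfolding M'_def by auto
      then show "j = y s'" using s' xinj'' unfolding T_def by auto
    qed
  next
    fix j assume "j \<in> J"
    then obtain s where s: "s \<in> T" "j = y s" unfolding J_def by auto
    show "\<exists>!i. (i, j) \<in> M'"
    proof (rule ex1I[of _ "x (Suc s)"])
      show "(x (Suc s), j) \<in> M'" using s unfolding M'_def by auto
    next
      fix i assume "(i, j) \<in> M'"
      then obtain t where "t \<in> T" "x (Suc t) = i" "y t = j" unfolding M'_def by auto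
      then show "i = x (Suc s)" using s yinj' unfolding T_def by auto
    qed
  qed
  have "I \<subseteq> {1..n}" using xr unfolding I_def by auto
  moreover have "J \<subseteq> {1..d}" using yr unfolding J_def by auto
  ultimately have "M = M'" using comp pm pm' unfolding compatible_def by blast
  moreover have "(x p, y p) \<in> M" using kp unfolding M_def T_def by auto
  moreover have "M' \<subseteq> B" using blue unfolding M'_def by auto
  moreover have "(x p, y p) \<in> R" by (rule red)
  ultimately show False unfolding R_def B_def by auto
qed

end
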